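(* Let $F_1(x_0,x_1,x_2)$, $F_2(y_0,y_1,y_2)$ be homogeneous of degree $d$ such that $X: F_1(x)=F_2(y)$ in $\mathbb{P}^5(\mathbb{C})$ is smooth. If $F_1\sim F_2$, then $X$ contains exactly $|\mathrm{Aut}(F_1)|$ planes of rank $3$.
   Context: Coordinates on $\mathbb{P}^5$ are $[x_0:x_1:x_2:y_0:y_1:y_2]$. Every plane in $\mathbb{P}^5$ is given by a rank-3 system $Ax=By$ with $A,B$ complex $3\times3$ matrices; the plane is of rank $k$ if $\mathrm{rank}\,A=k$ (this does not depend on the chosen system). $F\sim G$ means there exists $g\in\mathrm{GL}_3(\mathbb{C})$ with $F(gx)=G(x)$; $\mathrm{Aut}(F)=\{g\in\mathrm{GL}_3(\mathbb{C}) : F(gx)=F(x)\}$. *)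

theory Defs
  imports "HOL-Analysis.Analysis" "HOL-Library.Equipollence"
begin

text \<open>Points of C^3; a point of P^5 is represented by its (nonzero) affine
  coordinates (x,y) in C^3 x C^3.\<close>

definition hom_poly :: "nat \<Rightarrow> (complex^3 \<Rightarrow> complex) \<Rightarrow> bool" where
  "hom_poly d F \<longleftrightarrow> (\<exists>c :: nat \<Rightarrow> nat \<Rightarrow> nat \<Rightarrow> complex. \<forall>x.
     F x = (\<Sum>i\<le>d. \<Sum>j\<le>d - i. c i j (d - i - j) * (x$1)^i * (x$2)^j * (x$3)^(d - i - j)))"

definition pdiff :: "(complex^3 \<Rightarrow> complex) \<Rightarrow> complex^3 \<Rightarrow> 3 \<Rightarrow> complex" where
  "pdiff F x i = deriv (\<lambda>t. F (x + t *s axis i 1)) 0"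

definition hyp_X :: "(complex^3 \<Rightarrow> complex) \<Rightarrow> (complex^3 \<Rightarrow> complex) \<Rightarrow> ((complex^3) \<times> (complex^3)) set" where
  "hyp_X F1 F2 = {(x, y). F1 x = F2 y}"

text \<open>X is smooth: no point of P^5 on X where all partial derivatives of
  F1(x) - F2(y) vanish (Jacobian criterion).\<close>
definition smooth_X :: "(complex^3 \<Rightarrow> complex) \<Rightarrow> (complex^3 \<Rightarrow> complex) \<Rightarrow> bool" where
  "smooth_X F1 F2 \<longleftrightarrow> \<not> (\<exists>x y. (x, y) \<noteq> (0, 0) \<and> (x, y) \<in> hyp_X F1 F2 \<and>
      (\<forall>i. pdiff F1 x i = 0) \<and> (\<forall>i. pdiff F2 y i = 0))"

text \<open>The 3 x 6 coefficient matrix [A | -B] of the system A x = B y.\<close>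
definition sys_mat :: "complex^3^3 \<Rightarrow> complex^3^3 \<Rightarrow> complex^(3 + 3)^3" where
  "sys_mat A B = (\<chi> i. \<chi> j. case j of Inl k \<Rightarrow> A$i$k | Inr k \<Rightarrow> - (B$i$k))"

definition sys_sol :: "complex^3^3 \<Rightarrow> complex^3^3 \<Rightarrow> ((complex^3) \<times> (complex^3)) set" where
  "sys_sol A B = {(x, y). A *v x = B *v y}"

text \<open>A plane of P^5 (as its affine cone): solution set of a rank-3 system A x = B y.\<close>
definition is_plane :: "((complex^3) \<times> (complex^3)) set \<Rightarrow> bool" where
  "is_plane P \<longleftrightarrow> (\<exists>A B. rank (sys_mat A B) = 3 \<and> P = sys_sol A B)"

definition plane_of_rank :: "nat \<Rightarrow> ((complex^3) \<times> (complex^3)) set \<Rightarrow> bool" where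
  "plane_of_rank k P \<longleftrightarrow> (\<exists>A B. rank (sys_mat A B) = 3 \<and> P = sys_sol A B \<and> rank A = k)"

definition equiv_form :: "(complex^3 \<Rightarrow> complex) \<Rightarrow> (complex^3 \<Rightarrow> complex) \<Rightarrow> bool" where
  "equiv_form F G \<longleftrightarrow> (\<exists>g :: complex^3^3. invertible g \<and> (\<forall>x. F (g *v x) = G x))"

definition Aut :: "(complex^3 \<Rightarrow> complex) \<Rightarrow> (complex^3^3) set" where
  "Aut F = {g. invertible g \<and> (\<forall>x. F (g *v x) = F x)}"

end

theory Submission
  imports Defs
begin

lemma hom_scale:
  assumes "hom_poly d F"
  shows "F (c *s x) = c^d * F x"
proof -
  obtain a where a: "\<And>x. F x = (\<Sum>i\<le>d. \<Sum>j\<le>d - i. a i j (d - i - j) * (x$1)^i * (x$2)^j * (x$3)^(d - i - j))"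
    using assms unfolding hom_poly_def by blast
  have "F (c *s x) = (\<Sum>i\<le>d. \<Sum>j\<le>d - i. c^d * (a i j (d - i - j) * (x$1)^i * (x$2)^j * (x$3)^(d - i - j)))"
    unfolding a
  proof (intro sum.cong refl)
    fix i j assume i: "i \<in> {..d}" and j: "j \<in> {..d-i}"
    have e: "c^d = c^i * c^j * c^(d-i-j)" using i j
      by (metis (no_types, lifting) add_diff_inverse_nat atMost_iff diff_diff_left not_le power_add le_diff_conv2 add.commute)
    show "a i j (d - i - j) * ((c *s x)$1)^i * ((c *s x)$2)^j * ((c *s x)$3)^(d - i - j)
       = c^d * (a i j (d - i - j) * (x$1)^i * (x$2)^j * (x$3)^(d - i - j))"
      unfolding e by (simp add: power_mult_distrib)
  qed
  also have "\<dots> = c^d * F x" unfolding a by (simp add: sum_distrib_left)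
  finally show ?thesis .
qed

lemma deriv_pow_const:
  assumes "d \<noteq> 1"
  shows "deriv (\<lambda>t::complex. t^d * k) 0 = 0"
proof -
  have "((\<lambda>t::complex. t^d * k) has_field_derivative (of_nat d * 0^(d-1) * k)) (at 0)"
    by (auto intro!: derivative_eq_intros)
  moreover have "of_nat d * (0::complex)^(d-1) * k = 0" using assms
    by (cases d) auto
  ultimately show ?thesis using DERIV_imp_deriv by fastforce
qed

lemma rank3_invertible:
  fixes A :: "complex^3^3"
  assumes "rank A = 3"
  shows "invertible A"
proof -
  have "vec.dim (UNIV::(complex^3) set) = 3" by (simp add: vec_dim_card card_cart_basis)
  then have "vec.dim (rows A) = vec.dim (UNIV::(complex^3) set)"
    using assms unfolding row_rank_def_gen by simp

  then have "vec.span (rows A) = UNIV" using vec.dim_eq_full vec.dim_UNIV vec.dimension_def by metis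
  then show ?thesis using matrix_left_invertible_span_rows_gen invertible_left_inverse by blast
qed

definition graph :: "complex^3^3 \<Rightarrow> ((complex^3) \<times> (complex^3)) set" where
  "graph C = {(C *v y, y) | y. True}"

lemma rank3_graph:
  assumes "plane_of_rank 3 P" shows "\<exists>C. P = graph C"
proof -
  obtain A B where AB: "P = sys_sol A B" "rank A = 3" using assms unfolding plane_of_rank_def by blast
  then have inv: "invertible A" using rank3_invertible by blast
  then obtain Ai where L: "Ai ** A = mat 1" and R: "A ** Ai = mat 1"
    unfolding invertible_def by blast
  have 1: "x = (Ai ** B) *v y" if "A *v x = B *v y" for x y
  proof -
    have "Ai *v (A *v x) = Ai *v (B *v y)" using that by simp
    then show ?thesis using L by (simp add: matrix_vector_mul_assoc)
  qed
  have 2: "A *v ((Ai ** B) *v y) = B *v y" for y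
      using R by (simp add: matrix_vector_mul_assoc matrix_mul_assoc)
  have "sys_sol A B = graph (Ai ** B)"
    unfolding sys_sol_def graph_def using 1 2 by fastforce
  then show ?thesis using AB by blast
qed

lemma rank_right_inv:
  fixes M :: "'a::field^'n^'m" and N :: "'a^'m^'n"
  assumes "M ** N = mat 1"
  shows "rank M = CARD('m)"
proof -
  have ind: "\<And>c. (\<Sum>i\<in>UNIV. c i *s row i M) = 0 \<Longrightarrow> (\<forall>i. c i = 0)"
    using matrix_right_invertible_independent_rows assms by blast
  have inj: "inj (\<lambda>i. row i M)"
  proof (rule injI, rule ccontr)
    fix i j assume e: "row i M = row j M" and ne: "i \<noteq> j"
    define c where "c = (\<lambda>k. if k = i then (1::'a) else if k = j then -1 else 0)"
    have "(\<Sum>k\<in>UNIV. c k *s row k M) = (\<Sum>k\<in>{i,j}. c k *s row k M)"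
      by (rule sum.mono_neutral_right) (auto simp: c_def)
    also have "\<dots> = 0" using ne e by (simp add: c_def)
    finally have "c i = 0" using ind by blast
    then show False by (simp add: c_def)
  qed
  have r: "rows M = range (\<lambda>i. row i M)" unfolding rows_def by auto
  have "\<not> vec.dependent (rows M)"
  proof
    assume "vec.dependent (rows M)"
    then obtain u where u: "\<exists>v\<in>rows M. u v \<noteq> 0" "(\<Sum>v\<in>rows M. u v *s v) = 0"
      using vec.dependent_finite[of "rows M"] by (auto simp: r)
    have "(\<Sum>i\<in>UNIV. u (row i M) *s row i M) = 0"
      using u(2) unfolding r by (simp add: sum.reindex[OF inj])
    then have "\<forall>i. u (row i M) = 0" using ind[of "\<lambda>i. u (row i M)"] by blast
    then show False using u(1) r by auto
  qed
  then have "vec.dim (rows M) = card (rows M)" using vec.dim_eq_card_independent by blast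
  also have "\<dots> = CARD('m)" unfolding r using inj by (simp add: card_image)
  finally show ?thesis unfolding row_rank_def_gen .
qed

lemma sum_UNIV_plus: "(\<Sum>j\<in>(UNIV::('a::finite + 'b::finite) set). f j) = (\<Sum>k\<in>UNIV. f (Inl k)) + (\<Sum>k\<in>UNIV. f (Inr k))"
  unfolding UNIV_Plus_UNIV[symmetric] by (subst sum.Plus) (auto simp: comp_def)

lemma graph_plane: "is_plane (graph C) \<and> plane_of_rank 3 (graph C)"
proof -
  define N :: "complex^3^(3+3)" where "N = (\<chi> j. \<chi> i. case j of Inl k \<Rightarrow> (if k = i then 1 else 0) | Inr _ \<Rightarrow> 0)"
  have "sys_mat (mat 1) C ** N = mat 1"
  proof -
    have "(sys_mat (mat 1) C ** N) $ i $ i' = (mat 1 :: complex^3^3) $ i $ i'" for i i'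
    proof -
      have "(sys_mat (mat 1) C ** N) $ i $ i' = (\<Sum>j\<in>UNIV. sys_mat (mat 1) C $ i $ j * N $ j $ i')"
        by (simp add: matrix_matrix_mult_def)
      also have "\<dots> = (\<Sum>k\<in>UNIV. (mat 1 :: complex^3^3) $ i $ k * (if k = i' then 1 else 0))"
        by (simp add: sum_UNIV_plus sys_mat_def N_def)
      also have "\<dots> = (mat 1 :: complex^3^3) $ i $ i'"
        by (simp add: if_distrib cong: if_cong)
      finally show ?thesis .
    qed
    then show ?thesis by (simp add: vec_eq_iff)
  qed
  then have r1: "rank (sys_mat (mat 1) C) = 3" by (simp add: rank_right_inv)
  have r2: "rank (mat 1 :: complex^3^3) = 3" using rank_right_inv[of "mat 1 :: complex^3^3" "mat 1"] by simp
  have e: "graph C = sys_sol (mat 1) C" unfolding graph_def sys_sol_def by auto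
  show ?thesis unfolding is_plane_def plane_of_rank_def using r1 r2 e by blast
qed

lemma graph_sub: "graph C \<subseteq> hyp_X F1 F2 \<longleftrightarrow> (\<forall>y. F1 (C *v y) = F2 y)"
  unfolding graph_def hyp_X_def by auto

lemma graph_inj: "inj graph"
proof (rule injI)
  fix C D assume "graph C = graph D"
  then have "\<forall>y. C *v y = D *v y" unfolding graph_def by (auto simp: set_eq_iff)
  then show "C = D" using matrix_eq by blast
qed

lemma planes_eq: "{P. is_plane P \<and> plane_of_rank 3 P \<and> P \<subseteq> hyp_X F1 F2} = graph ` {C. \<forall>y. F1 (C *v y) = F2 y}"
proof (intro set_eqI iffI)
  fix P assume "P \<in> {P. is_plane P \<and> plane_of_rank 3 P \<and> P \<subseteq> hyp_X F1 F2}"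
  then have P: "plane_of_rank 3 P" "P \<subseteq> hyp_X F1 F2" by auto
  then obtain C where C: "P = graph C" using rank3_graph by blast
  then have "C \<in> {C. \<forall>y. F1 (C *v y) = F2 y}" using P graph_sub by blast
  then show "P \<in> graph ` {C. \<forall>y. F1 (C *v y) = F2 y}" using C by blast
next
  fix P assume "P \<in> graph ` {C. \<forall>y. F1 (C *v y) = F2 y}"
  then obtain C where C: "P = graph C" "\<forall>y. F1 (C *v y) = F2 y" by blast
  have "is_plane (graph C)" "plane_of_rank 3 (graph C)" using graph_plane by auto
  moreover have "graph C \<subseteq> hyp_X F1 F2" using graph_sub C(2) by blast
  ultimately show "P \<in> {P. is_plane P \<and> plane_of_rank 3 P \<and> P \<subseteq> hyp_X F1 F2}"
    using C(1) by blast
qed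

lemma planes_eqpoll: "{P. is_plane P \<and> plane_of_rank 3 P \<and> P \<subseteq> hyp_X F1 F2} \<approx> {C. \<forall>y. F1 (C *v y) = F2 y}"
  unfolding planes_eq by (rule inj_on_image_eqpoll_self, rule inj_on_subset[OF graph_inj], simp)

lemma F_zero:
  assumes "hom_poly d F" "d \<noteq> 0" shows "F 0 = 0"
  using hom_scale[OF assms(1), of 0 0] assms(2) by (simp add: power_0_left)

lemma pdiff_zero:
  assumes "hom_poly d F" "d \<noteq> 1" shows "pdiff F 0 i = 0"
proof -
  have "(\<lambda>t. F (0 + t *s axis i 1)) = (\<lambda>t. t^d * F (axis i 1))"
    using hom_scale[OF assms(1)] by simp
  then show ?thesis unfolding pdiff_def using deriv_pow_const[OF assms(2)] by simp
qed

lemma pdiff_ker: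
  assumes "hom_poly d F" "d \<noteq> 1" "\<forall>z. F (C *v z) = G z" "C *v y = 0"
  shows "pdiff G y i = 0"
proof -
  have "(\<lambda>t. G (y + t *s axis i 1)) = (\<lambda>t. t^d * F (C *v axis i 1))"
  proof
    fix t
    have "G (y + t *s axis i 1) = F (C *v (y + t *s axis i 1))" using assms(3) by simp
    also have "C *v (y + t *s axis i 1) = t *s (C *v axis i 1)"
      using assms(4) by (simp add: matrix_vector_right_distrib vector_scalar_commute)
    finally show "G (y + t *s axis i 1) = t^d * F (C *v axis i 1)"
      using hom_scale[OF assms(1)] by simp
  qed
  then show ?thesis unfolding pdiff_def using deriv_pow_const[OF assms(2)] by simp
qed

lemma M_invertible:
  assumes "hom_poly d F1" "d \<ge> 2" "smooth_X F1 F2" "\<forall>z. F1 (C *v z) = F2 z"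
  shows "invertible C"
proof (rule ccontr)
  assume "\<not> invertible C"
  then obtain y where y: "y \<noteq> 0" "C *v y = 0"
    using \<open>\<not> invertible C\<close> unfolding invertible_left_inverse matrix_left_invertible_ker by blast
  have "F1 0 = F2 y" using assms(4)[rule_format, of y] unfolding y(2) .
  then have "(0, y) \<in> hyp_X F1 F2" unfolding hyp_X_def by simp
  moreover have "\<forall>i. pdiff F1 0 i = 0" using pdiff_zero[OF assms(1)] assms(2) by simp
  moreover have "\<forall>i. pdiff F2 y i = 0" using pdiff_ker[OF assms(1) _ assms(4) y(2)] assms(2) by simp
  ultimately show False using assms(3) y(1) unfolding smooth_X_def by blast
qed

lemma d0_false:
  assumes "hom_poly 0 F1" "smooth_X F1 F2" "\<forall>z. F1 (g *v z) = F2 z"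
  shows False
proof -
  have c: "F1 x = F1 0" for x using hom_scale[OF assms(1), of 0 x] by simp
  have p1: "pdiff F1 x i = 0" for x i
  proof -
    have "(\<lambda>t. F1 (x + t *s axis i 1)) = (\<lambda>t. (t::complex)^0 * F1 0)"
    proof
      fix t show "F1 (x + t *s axis i 1) = (t::complex)^0 * F1 0" using c[of "x + t *s axis i 1"] by simp
    qed
    then show ?thesis unfolding pdiff_def using deriv_pow_const[of 0 "F1 0"] by simp
  qed
  have c2: "F2 x = F1 0" for x
  proof -
    have "F2 x = F1 (g *v x)" using assms(3) by simp
    also have "\<dots> = F1 0" by (rule c)
    finally show ?thesis .
  qed
  have p2: "pdiff F2 x i = 0" for x i
  proof -
    have "(\<lambda>t. F2 (x + t *s axis i 1)) = (\<lambda>t. (t::complex)^0 * F1 0)" by (rule ext) (simp only: power_0 mult_1 c2)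
    then show ?thesis unfolding pdiff_def using deriv_pow_const[of 0 "F1 0"] by simp
  qed
  have "(0::complex^3, axis 1 1 :: complex^3) \<noteq> (0, 0)" by (simp add: axis_eq_0_iff)
  moreover have "(0::complex^3, axis 1 1 :: complex^3) \<in> hyp_X F1 F2" unfolding hyp_X_def by (simp only: c2 mem_Collect_eq case_prod_conv)
  ultimately show False using assms(2) p1 p2 unfolding smooth_X_def by blast
qed

lemma sq_lepoll: assumes "infinite A" shows "A \<times> A \<lesssim> A"
  using card_of_Times_same_infinite[OF assms] eqpoll_iff_card_of_ordIso eqpoll_imp_lepoll by blast

lemma vec3_lepoll:
  assumes "infinite (UNIV::'a set)"
  shows "(UNIV::('a^3) set) \<lesssim> (UNIV::'a set)"
proof -
  have "(UNIV::('a^3) set) \<lesssim> (UNIV::'a set) \<times> ((UNIV::'a set) \<times> (UNIV::'a set))"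
    unfolding lepoll_def
    by (rule exI[of _ "\<lambda>v. (v$1, (v$2, v$3))"]) (auto simp: inj_on_def vec_eq_iff forall_3)
  also have "\<dots> \<lesssim> (UNIV::'a set) \<times> (UNIV::'a set)"
    by (rule times_lepoll_mono[OF lepoll_refl sq_lepoll[OF assms]])
  also have "\<dots> \<lesssim> (UNIV::'a set)" by (rule sq_lepoll[OF assms])
  finally show ?thesis .
qed

lemma mat_lepoll: "(UNIV::(complex^3^3) set) \<lesssim> (UNIV::complex set)"
proof -
  have i: "infinite (UNIV::complex set)" by (rule infinite_UNIV_char_0)
  have "infinite (UNIV::(complex^3) set)"
  proof
    assume "finite (UNIV::(complex^3) set)"
    then have "finite (range (\<lambda>v::complex^3. v$1))" by simp
    moreover have "range (\<lambda>v::complex^3. v$1) = UNIV"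
    proof -
      have "z = (\<chi> i. z) $ 1" for z::complex by simp
      then show ?thesis by blast
    qed
    ultimately show False using i by simp
  qed
  then have "(UNIV::(complex^3^3) set) \<lesssim> (UNIV::(complex^3) set)" by (rule vec3_lepoll)
  also have "\<dots> \<lesssim> (UNIV::complex set)" using i by (rule vec3_lepoll)
  finally show ?thesis .
qed

lemma hom1:
  assumes "hom_poly 1 F"
  shows "\<exists>a::complex^3. \<forall>x. F x = a$1*x$1 + a$2*x$2 + a$3*x$3"
proof -
  obtain c where c: "\<And>x. F x = (\<Sum>i\<le>1. \<Sum>j\<le>1 - i. c i j (1 - i - j) * (x$1)^i * (x$2)^j * (x$3)^(1 - i - j))"
    using assms unfolding hom_poly_def by blast
  have "F x = c 1 0 0 * x$1 + c 0 1 0 * x$2 + c 0 0 1 * x$3" for x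
    unfolding c by (simp add: atMost_Suc)
  then show ?thesis
    by (intro exI[of _ "\<chi> i. if i = 1 then c 1 0 0 else if i = 2 then c 0 1 0 else c 0 0 1"]) simp
qed

lemma orth:
  fixes v :: "complex^3"
  shows "\<exists>u::complex^3. u \<noteq> 0 \<and> v$1*u$1 + v$2*u$2 + v$3*u$3 = 0"
proof (cases "v$1 = 0")
  case True
  have "axis (1::3) (1::complex) $ 2 = 0" "axis (1::3) (1::complex) $ 3 = 0" by (simp_all add: axis_def)
  then show ?thesis using True by (intro exI[of _ "axis (1::3) (1::complex)"]) (simp add: axis_eq_0_iff)
next
  case False
  let ?u = "(\<chi> i. if i = 1 then v$2 else if i = 2 then - v$1 else 0) :: complex^3"
  have "?u $ 2 \<noteq> 0" using False by simp
  then have "?u \<noteq> 0" by (metis zero_index)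
  moreover have "v$1*?u$1 + v$2*?u$2 + v$3*?u$3 = 0" by (simp add: algebra_simps)
  ultimately show ?thesis by blast
qed

lemma aut1_lepoll:
  fixes a :: "complex^3"
  assumes F: "\<forall>x. F x = a$1*x$1 + a$2*x$2 + a$3*x$3"
  shows "(UNIV::complex set) \<lesssim> Aut F"
proof -
  obtain u :: "complex^3" where u: "u \<noteq> 0" "a$1*u$1 + a$2*u$2 + a$3*u$3 = 0" using orth[of a] by blast
  obtain w :: "complex^3" where w: "w \<noteq> 0" "u$1*w$1 + u$2*w$2 + u$3*w$3 = 0" using orth[of u] by blast
  define G :: "complex \<Rightarrow> complex^3^3" where "G t = (\<chi> i j. (if i = j then 1 else 0) + t * u$i * w$j)" for t
  have mvc: "(G t *v x)$i = x$i + t*u$i*(w$1*x$1 + w$2*x$2 + w$3*x$3)" for t x i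
    using exhaust_3[of i] by (auto simp: G_def matrix_vector_mult_def sum_3 algebra_simps)
  have FG: "F (G t *v x) = F x" for t x
    using u(2) unfolding F[rule_format] mvc by algebra
  have mm: "(G s ** G t)$i$j = (if i=j then 1 else 0) + (s+t)*u$i*w$j + s*t*u$i*w$j*(u$1*w$1 + u$2*w$2 + u$3*w$3)" for s t i j
    using exhaust_3[of i] exhaust_3[of j] by (auto simp: G_def matrix_matrix_mult_def sum_3 algebra_simps)
  have inv: "G s ** G (-s) = mat 1" for s
    by (simp add: vec_eq_iff mm w(2) mat_def)
  have invG: "invertible (G t)" for t
    unfolding invertible_def using inv[of t] inv[of "-t"] by auto
  obtain i where i: "u$i \<noteq> 0" using u(1) by (metis vec_eq_iff zero_index)
  obtain j where j: "w$j \<noteq> 0" using w(1) by (metis vec_eq_iff zero_index)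
  have "inj G"
  proof (rule injI)
    fix s t assume "G s = G t"
    then have "G s $ i $ j = G t $ i $ j" by simp
    then have "s * (u$i * w$j) = t * (u$i * w$j)" by (simp add: G_def mult.assoc)
    then show "s = t" using i j by simp
  qed
  moreover have "G ` UNIV \<subseteq> Aut F" unfolding Aut_def using invG FG by auto
  ultimately show ?thesis unfolding lepoll_def by blast
qed

theorem lemma2p2:
  fixes F1 F2 :: "complex^3 \<Rightarrow> complex" and d :: nat
  assumes "hom_poly d F1" and "hom_poly d F2"
    and "smooth_X F1 F2"
    and "equiv_form F1 F2"
  shows "{P. is_plane P \<and> plane_of_rank 3 P \<and> P \<subseteq> hyp_X F1 F2} \<approx> Aut F1"
proof -
  let ?M = "{C. \<forall>y. F1 (C *v y) = F2 y}"
  have P: "{P. is_plane P \<and> plane_of_rank 3 P \<and> P \<subseteq> hyp_X F1 F2} \<approx> ?M" by (rule planes_eqpoll)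
  obtain g where g: "invertible g" "\<forall>x. F1 (g *v x) = F2 x" using assms(4) unfolding equiv_form_def by blast
  obtain gi where gi: "g ** gi = mat 1" "gi ** g = mat 1" using g(1) unfolding invertible_def by blast
  have phi_in: "h ** g \<in> ?M" if "h \<in> Aut F1" for h
  proof -
    have "F1 ((h ** g) *v y) = F2 y" for y
    proof -
      have "F1 ((h ** g) *v y) = F1 (h *v (g *v y))" by (simp add: matrix_vector_mul_assoc)
      also have "\<dots> = F1 (g *v y)" using that unfolding Aut_def by simp
      also have "\<dots> = F2 y" using g(2) by simp
      finally show ?thesis .
    qed
    then show ?thesis by simp
  qed
  have phi_inj: "inj (\<lambda>h. h ** g)"
  proof (rule injI)
    fix h h' assume "h ** g = h' ** g"
    then have "(h ** g) ** gi = (h' ** g) ** gi" by simp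
    then show "h = h'" by (metis matrix_mul_assoc gi(1) matrix_mul_rid)
  qed
  have AM: "Aut F1 \<lesssim> ?M" unfolding lepoll_def
    using phi_in inj_on_subset[OF phi_inj] by blast
  have "?M \<approx> Aut F1"
  proof (cases "d = 0")
    case True
    then show ?thesis using d0_false[of F1 F2 g] assms(1,3) g(2) by simp
  next
    case False
    show ?thesis
    proof (cases "d = 1")
      case True
      then obtain a :: "complex^3" where a: "\<forall>x. F1 x = a$1*x$1 + a$2*x$2 + a$3*x$3"
        using hom1 assms(1) by blast
      have "?M \<lesssim> (UNIV::(complex^3^3) set)" by (rule subset_imp_lepoll) simp
      also have "\<dots> \<lesssim> (UNIV::complex set)" by (rule mat_lepoll)
      also have "\<dots> \<lesssim> Aut F1" by (rule aut1_lepoll[OF a])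
      finally show ?thesis using AM by (rule lepoll_antisym)
    next
      case d1: False
      have d2: "d \<ge> 2" using False d1 by simp
      have ginv: "invertible gi" unfolding invertible_def using gi by blast
      have "bij_betw (\<lambda>h. h ** g) (Aut F1) ?M"
        unfolding bij_betw_def
      proof
        show "inj_on (\<lambda>h. h ** g) (Aut F1)" using inj_on_subset[OF phi_inj] by blast
        show "(\<lambda>h. h ** g) ` Aut F1 = ?M"
        proof
          show "(\<lambda>h. h ** g) ` Aut F1 \<subseteq> ?M" using phi_in by blast
          show "?M \<subseteq> (\<lambda>h. h ** g) ` Aut F1"
          proof
            fix C assume C: "C \<in> ?M"
            then have Cinv: "invertible C" using M_invertible[OF assms(1) d2 assms(3)] by blast
            have "F1 ((C ** gi) *v x) = F1 x" for x
            proof -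
              have "F1 ((C ** gi) *v x) = F1 (C *v (gi *v x))" by (simp add: matrix_vector_mul_assoc)
              also have "\<dots> = F2 (gi *v x)" using C by simp
              also have "\<dots> = F1 (g *v (gi *v x))" using g(2) by simp
              also have "\<dots> = F1 x" by (simp add: matrix_vector_mul_assoc gi)
              finally show ?thesis .
            qed
            then have "C ** gi \<in> Aut F1" unfolding Aut_def using invertible_mult[OF Cinv ginv] by simp
            moreover have "C = (C ** gi) ** g" by (metis matrix_mul_assoc gi(2) matrix_mul_rid)
            ultimately show "C \<in> (\<lambda>h. h ** g) ` Aut F1" by blast
          qed
        qed
      qed
      then show ?thesis unfolding eqpoll_def using bij_betw_inv by blast
    qed
  qed
  then show ?thesis using P eqpoll_trans by blast
qed

end
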